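(* Let $(M,\mathcal T)$ be a closed pseudo 3-manifold with edge set $E$. If a solution $l(t)$ of the extended Ricci flow $\frac{d}{dt}l(t)=\widetilde K(l(t))$ converges to some $\widetilde l\in\mathbb R^E$ as $t\to+\infty$, then $\widetilde K(\widetilde l)=0$.
   Context: Closed pseudo 3-manifold $(M,\mathcal T)$: quotient of a disjoint union $\mathscr T$ of finitely many tetrahedra by affine isomorphisms pairing faces, every 2-face being paired with another; $E$ is the set of edge classes. For a tetrahedron $\sigma$ with vertices $v_1,\dots,v_4$ and $l\in\mathbb R^E$, $l_\sigma=(l_{ij})\in\mathbb R^6$, $l_{ij}=l(\text{class of } v_iv_j)$. Extended dihedral angles: for $(x_1,x_2,x_3)\in\mathbb R^3_{>0}$, $a_i$ is the Euclidean angle opposite $x_i$ if strict triangle inequalities hold, and $a_i=\pi$, $a_j=a_k=0$ if $x_i\ge x_j+x_k$. For $l\in\mathbb R^6$, $\{i,j,k,h\}=\{1,2,3,4\}$, $\alpha_{ij}(l)$ is the generalized angle opposite the side $e^{(l_{ij}+l_{kh})/2}$ in the generalized triangle with sides $e^{(l_{ij}+l_{kh})/2},e^{(l_{ik}+l_{jh})/2},e^{(l_{ih}+l_{jk})/2}$. The generalized Ricci curvature of $l\in\mathbb R^E$ is $\widetilde K_e(l)=2\pi-\sum\alpha_{ij}(l_\sigma)$, summed over pairs (tetrahedron $\sigma$, edge $v_iv_j$ of $\sigma$ in class $e$). *)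

theory Defs
  imports "HOL-Analysis.Analysis"
begin

(* Tetrahedra are the elements of a finite type 't; each tetrahedron has vertices 0,1,2,3.
   A 2-face of tetrahedron s is encoded as (s,k): the face opposite vertex k (k < 4).
   A face pairing is given by  p  (which face a face is glued to) and  phi  (the vertex
   bijection realising the affine isomorphism of the two faces). *)

definition closed_pseudo3 ::
  "('t \<times> nat \<Rightarrow> 't \<times> nat) \<Rightarrow> ('t \<times> nat \<Rightarrow> nat \<Rightarrow> nat) \<Rightarrow> bool" where
  "closed_pseudo3 p phi \<longleftrightarrow>
     finite (UNIV :: 't set) \<and>
     (\<forall>f. snd f < 4 \<longrightarrow>
        snd (p f) < 4 \<and> p f \<noteq> f \<and> p (p f) = f \<and>
        bij_betw (phi f) ({0..<4} - {snd f}) ({0..<4} - {snd (p f)}) \<and>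
        (\<forall>v \<in> {0..<4} - {snd f}. phi (p f) (phi f v) = v))"

definition tet_edges :: "('t \<times> nat set) set" where
  "tet_edges = {(s, {i, j}) | s i j. i < 4 \<and> j < 4 \<and> i \<noteq> j}"

definition glue_rel ::
  "('t \<times> nat \<Rightarrow> 't \<times> nat) \<Rightarrow> ('t \<times> nat \<Rightarrow> nat \<Rightarrow> nat)
     \<Rightarrow> (('t \<times> nat set) \<times> ('t \<times> nat set)) set" where
  "glue_rel p phi = {((s, {i, j}), (fst (p (s, k)), {phi (s, k) i, phi (s, k) j})) | s k i j.
      k < 4 \<and> i < 4 \<and> j < 4 \<and> i \<noteq> j \<and> i \<noteq> k \<and> j \<noteq> k}"

definition edge_class ::
  "('t \<times> nat \<Rightarrow> 't \<times> nat) \<Rightarrow> ('t \<times> nat \<Rightarrow> nat \<Rightarrow> nat)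
     \<Rightarrow> 't \<times> nat set \<Rightarrow> ('t \<times> nat set) set" where
  "edge_class p phi x = ((glue_rel p phi \<union> (glue_rel p phi)\<inverse>)\<^sup>*) `` {x}"

definition edge_classes ::
  "('t \<times> nat \<Rightarrow> 't \<times> nat) \<Rightarrow> ('t \<times> nat \<Rightarrow> nat \<Rightarrow> nat)
     \<Rightarrow> ('t \<times> nat set) set set" where
  "edge_classes p phi = edge_class p phi ` tet_edges"

definition ext_angle :: "real \<Rightarrow> real \<Rightarrow> real \<Rightarrow> real" where
  "ext_angle x1 x2 x3 =
     (if x1 \<ge> x2 + x3 then pi
      else if x2 \<ge> x1 + x3 \<or> x3 \<ge> x1 + x2 then 0
      else arccos ((x2\<^sup>2 + x3\<^sup>2 - x1\<^sup>2) / (2 * x2 * x3)))"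

definition lsig ::
  "('t \<times> nat \<Rightarrow> 't \<times> nat) \<Rightarrow> ('t \<times> nat \<Rightarrow> nat \<Rightarrow> nat)
     \<Rightarrow> (('t \<times> nat set) set \<Rightarrow> real) \<Rightarrow> 't \<Rightarrow> nat \<Rightarrow> nat \<Rightarrow> real" where
  "lsig p phi l s i j = l (edge_class p phi (s, {i, j}))"

definition gen_alpha ::
  "('t \<times> nat \<Rightarrow> 't \<times> nat) \<Rightarrow> ('t \<times> nat \<Rightarrow> nat \<Rightarrow> nat)
     \<Rightarrow> (('t \<times> nat set) set \<Rightarrow> real) \<Rightarrow> 't \<Rightarrow> nat set \<Rightarrow> real" where
  "gen_alpha p phi l s e =
     (let i = Min e; j = Max e; k = Min ({0..<4} - e); h = Max ({0..<4} - e);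
          L = lsig p phi l s
      in ext_angle (exp ((L i j + L k h) / 2))
                   (exp ((L i k + L j h) / 2))
                   (exp ((L i h + L j k) / 2)))"

definition gen_ricci ::
  "('t \<times> nat \<Rightarrow> 't \<times> nat) \<Rightarrow> ('t \<times> nat \<Rightarrow> nat \<Rightarrow> nat)
     \<Rightarrow> (('t \<times> nat set) set \<Rightarrow> real) \<Rightarrow> ('t \<times> nat set) set \<Rightarrow> real" where
  "gen_ricci p phi l c = 2 * pi - (\<Sum>(s, e) \<in> c. gen_alpha p phi l s e)"

end

theory Submission
  imports Defs
begin

lemma ext_angle_alt:
  assumes "x1 > 0" "x2 > 0" "x3 > 0"
  shows "ext_angle x1 x2 x3 = arccos (max (-1) (min 1 ((x2\<^sup>2 + x3\<^sup>2 - x1\<^sup>2) / (2 * x2 * x3))))"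
proof -
  define r where "r = (x2\<^sup>2 + x3\<^sup>2 - x1\<^sup>2) / (2 * x2 * x3)"
  have d: "2 * x2 * x3 > 0" using assms by simp
  have e1: "r \<le> -1 \<longleftrightarrow> (x2 + x3)\<^sup>2 \<le> x1\<^sup>2"
    unfolding r_def using d by (simp add: divide_le_eq power2_eq_square algebra_simps)
  have e2: "r \<ge> 1 \<longleftrightarrow> x1\<^sup>2 \<le> (x2 - x3)\<^sup>2"
    unfolding r_def using d by (simp add: le_divide_eq power2_eq_square algebra_simps)
  have s1: "(x2 + x3)\<^sup>2 \<le> x1\<^sup>2 \<longleftrightarrow> x2 + x3 \<le> x1"
    using assms by (simp add: power_mono_iff)
  have s2: "x1\<^sup>2 \<le> (x2 - x3)\<^sup>2 \<longleftrightarrow> x1 \<le> \<bar>x2 - x3\<bar>"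
    using assms by (metis abs_le_square_iff abs_of_pos)
  have "ext_angle x1 x2 x3 = arccos (max (-1) (min 1 r))"
  proof (cases "x2 + x3 \<le> x1")
    case True
    then have "r \<le> -1" using e1 s1 by simp
    then have "max (-1) (min 1 r) = -1" by simp
    then show ?thesis using True by (simp add: ext_angle_def)
  next
    case False
    note F = False
    show ?thesis
    proof (cases "x1 \<le> \<bar>x2 - x3\<bar>")
      case True
      then have "r \<ge> 1" using e2 s2 by simp
      then have "max (-1) (min 1 r) = 1" by simp
      moreover have "x1 + x3 \<le> x2 \<or> x1 + x2 \<le> x3" using True by (cases "x2 < x3") (auto simp: abs_if)
      ultimately show ?thesis using F by (simp add: ext_angle_def)
    next
      case False
      then have "-1 < r" "r < 1" using e1 e2 s1 s2 F by auto
      then have "max (-1) (min 1 r) = r" by simp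
      moreover have "\<not> (x1 + x3 \<le> x2 \<or> x1 + x2 \<le> x3)" using False by (cases "x2 < x3") (auto simp: abs_if)
      ultimately show ?thesis using F by (simp add: ext_angle_def r_def)
    qed
  qed
  then show ?thesis unfolding r_def .
qed

lemma ext_angle_tendsto:
  assumes "(a \<longlongrightarrow> a0) F" "(b \<longlongrightarrow> b0) F" "(c \<longlongrightarrow> c0) F"
    and "a0 > 0" "b0 > 0" "c0 > 0"
  shows "((\<lambda>x. ext_angle (a x) (b x) (c x)) \<longlongrightarrow> ext_angle a0 b0 c0) F"
proof -
  have ea: "\<forall>\<^sub>F x in F. a x > 0" using order_tendstoD(1)[OF assms(1) assms(4)] .
  have eb: "\<forall>\<^sub>F x in F. b x > 0" using order_tendstoD(1)[OF assms(2) assms(5)] .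
  have ec: "\<forall>\<^sub>F x in F. c x > 0" using order_tendstoD(1)[OF assms(3) assms(6)] .
  define g where "g = (\<lambda>x. max (-1) (min 1 (((b x)\<^sup>2 + (c x)\<^sup>2 - (a x)\<^sup>2) / (2 * b x * c x))))"
  have gt: "(g \<longlongrightarrow> max (-1) (min 1 ((b0\<^sup>2 + c0\<^sup>2 - a0\<^sup>2) / (2 * b0 * c0)))) F"
    unfolding g_def
    by (intro tendsto_max tendsto_min tendsto_const tendsto_divide tendsto_diff tendsto_add
        tendsto_power tendsto_mult assms(1-3)) (use assms(5,6) in simp)
  have "((\<lambda>x. arccos (g x)) \<longlongrightarrow> arccos (max (-1) (min 1 ((b0\<^sup>2 + c0\<^sup>2 - a0\<^sup>2) / (2 * b0 * c0))))) F"
    by (rule continuous_on_tendsto_compose[OF continuous_on_arccos' gt]) (auto simp: g_def)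
  then have "((\<lambda>x. arccos (g x)) \<longlongrightarrow> ext_angle a0 b0 c0) F"
    using ext_angle_alt[OF assms(4-6)] by simp
  moreover have "\<forall>\<^sub>F x in F. arccos (g x) = ext_angle (a x) (b x) (c x)"
    using ea eb ec by eventually_elim (simp add: g_def ext_angle_alt)
  ultimately show ?thesis by (rule Lim_transform_eventually)
qed



lemma glue_tet:
  assumes "closed_pseudo3 p phi" "(x, y) \<in> glue_rel p phi"
  shows "x \<in> tet_edges \<and> y \<in> tet_edges"
proof -
  obtain s k i j where xy: "x = (s, {i, j})" "y = (fst (p (s, k)), {phi (s, k) i, phi (s, k) j})"
    and c: "k < 4" "i < 4" "j < 4" "i \<noteq> j" "i \<noteq> k" "j \<noteq> k"
    using assms(2) unfolding glue_rel_def by blast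
  have b: "bij_betw (phi (s,k)) ({0..<4} - {k}) ({0..<4} - {snd (p (s,k))})"
    using assms(1) c(1) unfolding closed_pseudo3_def by auto
  have "phi (s,k) i \<in> {0..<4} - {snd (p (s,k))}" "phi (s,k) j \<in> {0..<4} - {snd (p (s,k))}"
    using bij_betw_apply[OF b] c by auto
  moreover have "phi (s,k) i \<noteq> phi (s,k) j"
    using bij_betw_imp_inj_on[OF b] c by (auto simp: inj_on_def)
  ultimately show ?thesis using xy c unfolding tet_edges_def by auto
qed

lemma class_tet:
  assumes "closed_pseudo3 p phi" "c \<in> edge_classes p phi" "y \<in> c"
  shows "y \<in> tet_edges"
proof -
  obtain x where x: "x \<in> tet_edges" "c = edge_class p phi x"
    using assms(2) unfolding edge_classes_def by auto
  have "(x, y) \<in> (glue_rel p phi \<union> (glue_rel p phi)\<inverse>)\<^sup>*"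
    using assms(3) x(2) unfolding edge_class_def by auto
  then show ?thesis
  proof (induction rule: rtrancl_induct)
    case base
    then show ?case using x(1) .
  next
    case (step y z)
    then show ?case using glue_tet[OF assms(1)] by blast
  qed
qed

lemma tet_class:
  assumes "a < 4" "b < 4" "a \<noteq> b"
  shows "edge_class p phi (s, {a, b}) \<in> edge_classes p phi"
  using assms unfolding edge_classes_def tet_edges_def by blast

lemma four_distinct:
  fixes i j :: nat
  assumes "i < 4" "j < 4" "i \<noteq> j"
  defines "e \<equiv> {i, j}"
  shows "Min e < 4 \<and> Max e < 4 \<and> Min ({0..<4} - e) < 4 \<and> Max ({0..<4} - e) < 4 \<and>
    Min e \<noteq> Max e \<and> Min e \<noteq> Min ({0..<4} - e) \<and> Min e \<noteq> Max ({0..<4} - e) \<and>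
    Max e \<noteq> Min ({0..<4} - e) \<and> Max e \<noteq> Max ({0..<4} - e) \<and>
    Min ({0..<4} - e) \<noteq> Max ({0..<4} - e)"
proof -
  have me: "Min e = min i j" "Max e = max i j" unfolding e_def by auto
  have "card ({0..<4::nat} - e) = 2"
    using assms(1-3) unfolding e_def by (subst card_Diff_subset) auto
  then obtain k h where kh: "{0..<4} - e = {k, h}" "k \<noteq> h" by (auto simp: card_2_iff)
  have mc: "Min ({0..<4} - e) = min k h" "Max ({0..<4} - e) = max k h" unfolding kh(1) by auto
  have "k \<in> {0..<4} - e" "h \<in> {0..<4} - e" unfolding kh(1) by simp_all
  then have f: "k < 4" "h < 4" "k \<noteq> i" "k \<noteq> j" "h \<noteq> i" "h \<noteq> j" unfolding e_def by auto
  show ?thesis unfolding me mc using f kh(2) assms(1-3) by (simp add: min_def max_def)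
qed

lemma gen_alpha_tendsto:
  assumes "\<And>a b. a < 4 \<Longrightarrow> b < 4 \<Longrightarrow> a \<noteq> b \<Longrightarrow>
     ((\<lambda>t. l t (edge_class p phi (s, {a, b}))) \<longlongrightarrow> lt (edge_class p phi (s, {a, b}))) F"
    and "i < 4" "j < 4" "i \<noteq> j" "e = {i, j}"
  shows "((\<lambda>t. gen_alpha p phi (l t) s e) \<longlongrightarrow> gen_alpha p phi lt s e) F"
proof -
  note D = four_distinct[OF assms(2-4), folded assms(5)]
  define a where "a = Min e"
  define b where "b = Max e"
  define k where "k = Min ({0..<4} - e)"
  define h where "h = Max ({0..<4} - e)"
  have ne: "a < 4" "b < 4" "k < 4" "h < 4" "a \<noteq> b" "k \<noteq> h" "a \<noteq> k" "b \<noteq> h" "a \<noteq> h" "b \<noteq> k"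
    using D unfolding a_def b_def k_def h_def by auto
  have T: "\<And>x y. x < 4 \<Longrightarrow> y < 4 \<Longrightarrow> x \<noteq> y \<Longrightarrow>
     ((\<lambda>t. lsig p phi (l t) s x y) \<longlongrightarrow> lsig p phi lt s x y) F"
    unfolding lsig_def by (rule assms(1))
  have E: "\<And>x y u v. x < 4 \<Longrightarrow> y < 4 \<Longrightarrow> x \<noteq> y \<Longrightarrow>
     u < 4 \<Longrightarrow> v < 4 \<Longrightarrow> u \<noteq> v \<Longrightarrow>
     ((\<lambda>t. exp ((lsig p phi (l t) s x y + lsig p phi (l t) s u v) / 2)) \<longlongrightarrow>
        exp ((lsig p phi lt s x y + lsig p phi lt s u v) / 2)) F"
    by (intro tendsto_intros T) simp_all
  have E1: "((\<lambda>t. exp ((lsig p phi (l t) s a b + lsig p phi (l t) s k h) / 2)) \<longlongrightarrow>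
        exp ((lsig p phi lt s a b + lsig p phi lt s k h) / 2)) F"
    using ne by (intro E)
  have E2: "((\<lambda>t. exp ((lsig p phi (l t) s a k + lsig p phi (l t) s b h) / 2)) \<longlongrightarrow>
        exp ((lsig p phi lt s a k + lsig p phi lt s b h) / 2)) F"
    using ne by (intro E)
  have E3: "((\<lambda>t. exp ((lsig p phi (l t) s a h + lsig p phi (l t) s b k) / 2)) \<longlongrightarrow>
        exp ((lsig p phi lt s a h + lsig p phi lt s b k) / 2)) F"
    using ne by (intro E)
  show ?thesis
    unfolding gen_alpha_def Let_def a_def[symmetric] b_def[symmetric] k_def[symmetric] h_def[symmetric]
    by (rule ext_angle_tendsto[OF E1 E2 E3]) simp_all
qed

theorem mainTheorem10:
  fixes p :: "'t \<times> nat \<Rightarrow> 't \<times> nat" and phi :: "'t \<times> nat \<Rightarrow> nat \<Rightarrow> nat"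
    and l :: "real \<Rightarrow> ('t \<times> nat set) set \<Rightarrow> real"
    and lt :: "('t \<times> nat set) set \<Rightarrow> real"
  assumes "closed_pseudo3 p phi"
    and "\<forall>t\<ge>0. \<forall>c\<in>edge_classes p phi.
           ((\<lambda>s. l s c) has_real_derivative gen_ricci p phi (l t) c) (at t within {0..})"
    and "\<forall>c\<in>edge_classes p phi. ((\<lambda>t. l t c) \<longlongrightarrow> lt c) at_top"
  shows "\<forall>c\<in>edge_classes p phi. gen_ricci p phi lt c = 0"
proof
  fix c assume c: "c \<in> edge_classes p phi"
  have conv: "((\<lambda>t. gen_ricci p phi (l t) c) \<longlongrightarrow> gen_ricci p phi lt c) at_top"
    unfolding gen_ricci_def
    apply (rule tendsto_diff[OF tendsto_const])
  proof (rule tendsto_sum)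
    fix x assume x: "x \<in> c"
    obtain s e where se: "x = (s, e)" by fastforce
    have "(s, e) \<in> tet_edges" using class_tet[OF assms(1) c] x se by simp
    then obtain i j where ij: "e = {i, j}" "i < 4" "j < 4" "i \<noteq> j"
      unfolding tet_edges_def by blast
    have "((\<lambda>t. gen_alpha p phi (l t) s e) \<longlongrightarrow> gen_alpha p phi lt s e) at_top"
    proof (rule gen_alpha_tendsto[OF _ ij(2-4) ij(1)])
      fix a b :: nat assume ab: "a < 4" "b < 4" "a \<noteq> b"
      have "edge_class p phi (s, {a, b}) \<in> edge_classes p phi" by (rule tet_class[OF ab])
      then show "((\<lambda>t. l t (edge_class p phi (s, {a, b}))) \<longlongrightarrow> lt (edge_class p phi (s, {a, b}))) at_top"
        using assms(3) by blast
    qed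
    then show "((\<lambda>t. case x of (s, e) \<Rightarrow> gen_alpha p phi (l t) s e) \<longlongrightarrow>
        (case x of (s, e) \<Rightarrow> gen_alpha p phi lt s e)) at_top" using se by simp
  qed
  define f where "f = (\<lambda>t. l t c)"
  define g where "g = (\<lambda>t. gen_ricci p phi (l t) c)"
  define L where "L = gen_ricci p phi lt c"
  have der: "\<And>t. t \<ge> 0 \<Longrightarrow> (f has_real_derivative g t) (at t within {0..})"
    using assms(2) c unfolding f_def g_def by blast
  have fl: "(f \<longlongrightarrow> lt c) at_top" using assms(3) c unfolding f_def by blast
  show "gen_ricci p phi lt c = 0"
  proof (rule ccontr)
    assume "gen_ricci p phi lt c \<noteq> 0"
    then have Lp: "\<bar>L\<bar> / 2 > 0" unfolding L_def by simp
    have "\<forall>\<^sub>F t in at_top. dist (g t) L < \<bar>L\<bar> / 2"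
      using tendstoD[OF conv[folded g_def L_def] Lp] .
    then obtain T1 where T1: "\<And>t. t \<ge> T1 \<Longrightarrow> \<bar>g t - L\<bar> < \<bar>L\<bar> / 2"
      by (auto simp: eventually_at_top_linorder dist_real_def)
    have sh: "filterlim (\<lambda>t::real. t + 1) at_top at_top"
      using filterlim_tendsto_add_at_top[OF tendsto_const[of "1::real" at_top] filterlim_ident]
      by (simp add: add.commute)
    have "((\<lambda>t. f (t + 1) - f t) \<longlongrightarrow> lt c - lt c) at_top"
      by (intro tendsto_diff fl filterlim_compose[OF fl sh])
    then have h0: "((\<lambda>t. f (t + 1) - f t) \<longlongrightarrow> 0) at_top" by simp
    have "\<forall>\<^sub>F t in at_top. dist (f (t + 1) - f t) 0 < \<bar>L\<bar> / 2"
      by (rule tendstoD[OF h0 Lp])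
    then obtain T2 where T2: "\<And>t. t \<ge> T2 \<Longrightarrow> \<bar>f (t + 1) - f t\<bar> < \<bar>L\<bar> / 2"
      by (auto simp: eventually_at_top_linorder dist_real_def)
    define t where "t = max (max T1 T2) 0"
    have t: "t \<ge> T1" "t \<ge> T2" "t \<ge> 0" unfolding t_def by auto
    have cont: "continuous_on {t..t+1} f"
    proof (rule continuous_on_eq_continuous_within[THEN iffD2], intro ballI)
      fix x assume x: "x \<in> {t..t+1}"
      then have "(f has_real_derivative g x) (at x within {t..t+1})"
        using t by (intro DERIV_subset[OF der]) auto
      then show "continuous (at x within {t..t+1}) f" by (rule DERIV_continuous)
    qed
    have dat: "\<And>z. z > 0 \<Longrightarrow> (f has_real_derivative g z) (at z)"
    proof -
      fix z :: real assume z: "z > 0"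
      have "(f has_real_derivative g z) (at z within {0<..})"
        using z by (intro DERIV_subset[OF der]) auto
      then show "(f has_real_derivative g z) (at z)"
        using at_within_open[of z "{0<..}"] z by simp
    qed
    have "\<And>z. t < z \<Longrightarrow> z < t + 1 \<Longrightarrow> f differentiable at z"
    proof -
      fix z assume "t < z" "z < t + 1"
      then have "z > 0" using t(3) by linarith
      then show "f differentiable at z" using dat[of z] unfolding real_differentiable_def by blast
    qed
    then obtain d z where z: "t < z" "z < t + 1" "(f has_real_derivative d) (at z)"
      and eq: "f (t + 1) - f t = (t + 1 - t) * d"
      using MVT[of t "t+1" f, OF _ cont] by auto
    have "d = g z" using DERIV_unique[OF z(3) dat] z(1) t(3) by simp
    then have "\<bar>g z\<bar> < \<bar>L\<bar> / 2" using eq T2[OF t(2)] by simp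
    moreover have "\<bar>g z - L\<bar> < \<bar>L\<bar> / 2" using T1 z(1) t(1) by simp
    ultimately show False by linarith
  qed
qed

end
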